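(* Let $0 \le \alpha \le \beta < \infty$ with $\alpha + \beta > 0$, and let $\varphi\colon \mathbb{R} \to \mathbb{R}$ satisfy $\alpha \le \frac{\varphi(a) - \varphi(b)}{a - b} \le \beta$ for all $a \neq b$. Let $\phi\colon \mathbb{R}^{n_1} \to \mathbb{R}^{n_1}$, $\phi(v) = (\varphi(v_1),\dots,\varphi(v_{n_1}))$. Let $W \in \mathbb{R}^{n_1 \times n_0}$, $\rho > 0$, and let $T \in \mathbb{R}^{n_1 \times n_1}$ be diagonal and positive definite, such that $$W W^\top \preceq \frac{2\rho}{(\alpha+\beta)^2}\, T^{-1}.$$ Then the map $h\colon \mathbb{R}^{n_0} \to \mathbb{R}^{n_0}$, $$h(x) = \sqrt{\rho}\, x - \frac{\alpha+\beta}{\sqrt{\rho}}\, W^\top T\, \phi(Wx),$$ satisfies $\|h(x) - h(x')\|_2 \le \sqrt{\rho}\,\|x - x'\|_2$ for all $x, x' \in \mathbb{R}^{n_0}$.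
   Context: $\preceq$ denotes the Loewner (positive semidefinite) order on symmetric matrices. *)

theory Defs
  imports "HOL-Analysis.Analysis"
begin

definition diagonal_mat :: "real^'n^'n \<Rightarrow> bool" where
  "diagonal_mat T \<longleftrightarrow> (\<forall>i j. i \<noteq> j \<longrightarrow> T $ i $ j = 0)"

definition pos_def_mat :: "real^'n^'n \<Rightarrow> bool" where
  "pos_def_mat T \<longleftrightarrow> transpose T = T \<and> (\<forall>v. v \<noteq> 0 \<longrightarrow> v \<bullet> (T *v v) > 0)"

definition loewner_le :: "real^'n^'n \<Rightarrow> real^'n^'n \<Rightarrow> bool" where
  "loewner_le A B \<longleftrightarrow> transpose A = A \<and> transpose B = B \<and>
     (\<forall>v. v \<bullet> ((B - A) *v v) \<ge> 0)"

definition vec_map :: "(real \<Rightarrow> real) \<Rightarrow> real^'n \<Rightarrow> real^'n" where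
  "vec_map f v = (\<chi> i. f (v $ i))"

end

theory Submission
  imports Defs
begin

lemma diag_mult:
  fixes T :: "real^'n^'n"
  assumes "diagonal_mat T"
  shows "(T *v v) $ i = T $ i $ i * v $ i"
proof -
  have "(T *v v) $ i = (\<Sum>j\<in>UNIV. T $ i $ j * v $ j)"
    by (simp add: matrix_vector_mult_def)
  also have "\<dots> = (\<Sum>j\<in>UNIV. if j = i then T $ i $ i * v $ i else 0)"
    by (rule sum.cong) (use assms in \<open>auto simp: diagonal_mat_def\<close>)
  also have "\<dots> = T $ i $ i * v $ i" by simp
  finally show ?thesis .
qed

lemma pd_diag_pos:
  fixes T :: "real^'n^'n"
  assumes "diagonal_mat T" "pos_def_mat T"
  shows "T $ i $ i > 0"
proof -
  have "axis i (1::real) \<noteq> 0" by (simp add: axis_eq_0_iff)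
  then have "axis i 1 \<bullet> (T *v axis i 1) > 0" using assms(2) by (auto simp: pos_def_mat_def)
  moreover have "axis i 1 \<bullet> (T *v axis i 1) = T $ i $ i"
  proof -
    have "axis i 1 \<bullet> (T *v axis i 1) = (T *v axis i 1) $ i"
      by (simp add: inner_commute[of "axis i 1"] cart_eq_inner_axis[symmetric])
    also have "\<dots> = T $ i $ i" using assms(1) by (simp add: diag_mult axis_def)
    finally show ?thesis .
  qed
  ultimately show ?thesis by simp
qed

lemma pd_inv:
  fixes T :: "real^'n^'n"
  assumes "pos_def_mat T"
  shows "matrix_inv T *v (T *v v) = v"
proof -
  have "\<forall>x. T *v x = 0 \<longrightarrow> x = 0"
  proof (intro allI impI, rule ccontr)
    fix x assume "T *v x = 0" "x \<noteq> 0"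
    then show False using assms by (auto simp: pos_def_mat_def)
  qed
  then have "invertible T" using matrix_left_invertible_ker invertible_left_inverse by blast
  then have "\<exists>A'. T ** A' = mat 1 \<and> A' ** T = mat 1" by (simp add: invertible_def)
  then have "T ** matrix_inv T = mat 1 \<and> matrix_inv T ** T = mat 1"
    unfolding matrix_inv_def by (rule someI_ex)
  then show ?thesis by (simp add: matrix_vector_mul_assoc)
qed

lemma aux:
  fixes p q :: "'a::real_inner"
  shows "(a *\<^sub>R p - b *\<^sub>R q) \<bullet> (a *\<^sub>R p - b *\<^sub>R q) = a*a*(p \<bullet> p) - 2*a*b*(p \<bullet> q) + b*b*(q \<bullet> q)"
  by (simp add: inner_diff_left inner_diff_right inner_commute[of q p] algebra_simps)

theorem proposition2:
  fixes \<alpha> \<beta> \<rho> :: real and \<phi> :: "real \<Rightarrow> real"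
    and W :: "real^'n0^'n1" and T :: "real^'n1^'n1"
  assumes "0 \<le> \<alpha>" and "\<alpha> \<le> \<beta>" and "\<alpha> + \<beta> > 0"
    and "\<And>a b. a \<noteq> b \<Longrightarrow> \<alpha> \<le> (\<phi> a - \<phi> b) / (a - b) \<and> (\<phi> a - \<phi> b) / (a - b) \<le> \<beta>"
    and "\<rho> > 0"
    and "diagonal_mat T" and "pos_def_mat T"
    and "loewner_le (W ** transpose W) ((2 * \<rho> / (\<alpha> + \<beta>)^2) *\<^sub>R matrix_inv T)"
  shows "\<forall>x x' :: real^'n0.
     norm ((sqrt \<rho> *\<^sub>R x - ((\<alpha> + \<beta>) / sqrt \<rho>) *\<^sub>R (transpose W ** T) *v vec_map \<phi> (W *v x))
         - (sqrt \<rho> *\<^sub>R x' - ((\<alpha> + \<beta>) / sqrt \<rho>) *\<^sub>R (transpose W ** T) *v vec_map \<phi> (W *v x')))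
     \<le> sqrt \<rho> * norm (x - x')"
proof (intro allI)
  fix x x' :: "real^'n0"
  define c where "c = \<alpha> + \<beta>"
  define r where "r = sqrt \<rho>"
  define k where "k = 2 * \<rho> / c^2"
  define d where "d = x - x'"
  define u where "u = W *v d"
  define \<delta> where "\<delta> = vec_map \<phi> (W *v x) - vec_map \<phi> (W *v x')"
  define y where "y = T *v \<delta>"
  define z where "z = r *\<^sub>R d - (c / r) *\<^sub>R (transpose W *v y)"
  have c0: "c > 0" using assms(3) by (simp add: c_def)
  have r0: "r > 0" using assms(5) by (simp add: r_def)
  have rr: "r * r = \<rho>" using assms(5) by (simp add: r_def)
  have lhs: "(r *\<^sub>R x - (c / r) *\<^sub>R (transpose W ** T) *v vec_map \<phi> (W *v x))
         - (r *\<^sub>R x' - (c / r) *\<^sub>R (transpose W ** T) *v vec_map \<phi> (W *v x')) = z"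
    by (simp add: z_def d_def y_def \<delta>_def matrix_vector_mul_assoc scaleR_matrix_vector_assoc[symmetric]
        matrix_vector_mult_diff_distrib algebra_simps)
  have ud: "\<And>i. (\<delta> $ i - \<alpha> * u $ i) * (\<delta> $ i - \<beta> * u $ i) \<le> 0"
  proof -
    fix i
    have ui: "u $ i = (W *v x) $ i - (W *v x') $ i"
      by (simp add: u_def d_def matrix_vector_mult_diff_distrib)
    have di: "\<delta> $ i = \<phi> ((W *v x) $ i) - \<phi> ((W *v x') $ i)"
      by (simp add: \<delta>_def vec_map_def)
    show "(\<delta> $ i - \<alpha> * u $ i) * (\<delta> $ i - \<beta> * u $ i) \<le> 0"
    proof (cases "u $ i = 0")
      case True then show ?thesis using ui di by simp
    next
      case False
      let ?q = "\<delta> $ i / u $ i"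
      have "\<alpha> \<le> ?q" "?q \<le> \<beta>" using assms(4)[of "(W *v x) $ i" "(W *v x') $ i"] False ui di by auto
      then have "(?q - \<alpha>) * (?q - \<beta>) \<le> 0" by (simp add: mult_nonneg_nonpos)
      then have "(u $ i)^2 * ((?q - \<alpha>) * (?q - \<beta>)) \<le> 0" by (simp add: mult_nonneg_nonpos)
      moreover have "(u $ i)^2 * ((?q - \<alpha>) * (?q - \<beta>)) = (\<delta> $ i - \<alpha> * u $ i) * (\<delta> $ i - \<beta> * u $ i)"
        using False by (simp add: field_simps power2_eq_square)
      ultimately show ?thesis by simp
    qed
  qed
  have trm: "\<And>i. \<delta> $ i * (\<delta> $ i - c * u $ i) \<le> 0"
  proof -
    fix i
    have "\<delta> $ i * (\<delta> $ i - c * u $ i) = (\<delta> $ i - \<alpha> * u $ i) * (\<delta> $ i - \<beta> * u $ i) - \<alpha> * \<beta> * (u $ i)^2"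
      by (simp add: c_def algebra_simps power2_eq_square)
    moreover have "\<alpha> * \<beta> * (u $ i)^2 \<ge> 0" using assms(1,2) by simp
    ultimately show "\<delta> $ i * (\<delta> $ i - c * u $ i) \<le> 0" using ud[of i] by linarith
  qed
  have dWy: "d \<bullet> (transpose W *v y) = u \<bullet> y"
    by (metis dot_lmul_matrix u_def vector_transpose_matrix inner_commute)
  have WyWy: "(transpose W *v y) \<bullet> (transpose W *v y) = y \<bullet> ((W ** transpose W) *v y)"
    by (metis dot_lmul_matrix vector_transpose_matrix matrix_vector_mul_assoc inner_commute)
  have "y \<bullet> ((k *\<^sub>R matrix_inv T - W ** transpose W) *v y) \<ge> 0"
    using assms(8) by (simp add: loewner_le_def k_def c_def)
  then have "y \<bullet> ((W ** transpose W) *v y) \<le> y \<bullet> ((k *\<^sub>R matrix_inv T) *v y)"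
    by (simp add: matrix_vector_mult_diff_rdistrib inner_diff_right)
  also have "\<dots> = k * (y \<bullet> \<delta>)"
    by (simp add: scaleR_matrix_vector_assoc[symmetric] y_def pd_inv[OF assms(7)])
  finally have Wy: "(transpose W *v y) \<bullet> (transpose W *v y) \<le> k * (y \<bullet> \<delta>)" using WyWy by simp
  have yd: "y \<bullet> \<delta> = (\<Sum>i\<in>UNIV. T $ i $ i * (\<delta> $ i * \<delta> $ i))"
    by (simp add: inner_vec_def y_def diag_mult[OF assms(6)] mult.assoc)
  have uy: "u \<bullet> y = (\<Sum>i\<in>UNIV. T $ i $ i * (u $ i * \<delta> $ i))"
    by (simp add: inner_vec_def y_def diag_mult[OF assms(6)] algebra_simps)
  have sumneg: "(\<Sum>i\<in>UNIV. T $ i $ i * (\<delta> $ i * (\<delta> $ i - c * u $ i))) \<le> 0"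
    by (rule sum_nonpos) (simp add: mult_nonneg_nonpos less_imp_le[OF pd_diag_pos[OF assms(6,7)]] trm)
  have sumeq: "(\<Sum>i\<in>UNIV. T $ i $ i * (\<delta> $ i * (\<delta> $ i - c * u $ i)))
      = y \<bullet> \<delta> - c * (u \<bullet> y)"
    by (simp add: yd uy sum_distrib_left sum_subtractf[symmetric] algebra_simps)
  have zz: "z \<bullet> z = \<rho> * (d \<bullet> d) - 2 * c * (u \<bullet> y) + (c^2/\<rho>) * ((transpose W *v y) \<bullet> (transpose W *v y))"
    unfolding z_def aux dWy using r0 rr by (simp add: field_simps power2_eq_square)
  have "(c^2/\<rho>) * ((transpose W *v y) \<bullet> (transpose W *v y)) \<le> (c^2/\<rho>) * (k * (y \<bullet> \<delta>))"
    using Wy assms(5) by (intro mult_left_mono) auto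
  also have "\<dots> = 2 * (y \<bullet> \<delta>)" using c0 assms(5) by (simp add: k_def field_simps)
  finally have "z \<bullet> z \<le> \<rho> * (d \<bullet> d) + 2 * (y \<bullet> \<delta> - c * (u \<bullet> y))" using zz by (simp add: right_diff_distrib)
  moreover have "y \<bullet> \<delta> - c * (u \<bullet> y) \<le> 0" using sumneg sumeq by simp
  ultimately have "z \<bullet> z \<le> \<rho> * (d \<bullet> d)" by (smt (verit))
  moreover have "(norm z)^2 = z \<bullet> z" by (simp add: power2_norm_eq_inner)
  moreover have "(r * norm d)^2 = r * r * (d \<bullet> d)"
    unfolding dot_square_norm by (simp add: power_mult_distrib power2_eq_square)
  ultimately have "(norm z)^2 \<le> (r * norm d)^2" using rr by (smt (verit))
  moreover have "0 \<le> r * norm d" using r0 by simp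
  ultimately have "norm z \<le> r * norm d" by (rule power2_le_imp_le)
  then show "norm ((sqrt \<rho> *\<^sub>R x - ((\<alpha> + \<beta>) / sqrt \<rho>) *\<^sub>R (transpose W ** T) *v vec_map \<phi> (W *v x))
         - (sqrt \<rho> *\<^sub>R x' - ((\<alpha> + \<beta>) / sqrt \<rho>) *\<^sub>R (transpose W ** T) *v vec_map \<phi> (W *v x')))
     \<le> sqrt \<rho> * norm (x - x')"
    using lhs by (simp add: r_def c_def d_def)
qed

end
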